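(* Let $p$ be a prime, let $k\geq1$ and $s\geq 1$ be integers, and let $n=p^s+1$. Let $H$ be a pro-$p$ group satisfying one of the following conditions, where $I$ is an arbitrary index set and products carry the product topology: (1) $H\simeq\prod_I\mathbb{Z}/p^{s+1}\mathbb{Z}$; (2) $H\simeq U\rtimes V$ with $U=\prod_I\mathbb{Z}/p^{s+1}\mathbb{Z}$ and $V=\mathbb{Z}/p^{s+1}\mathbb{Z}$, and there is a generator $\sigma$ of $V$ such that $\sigma\tau\sigma^{-1}=\tau^{p^k+1}$ for all $\tau\in U$; (3) $p=2$, $H\simeq U\rtimes V$ with $U=\prod_I\mathbb{Z}/2^{s+1}\mathbb{Z}$, $V=\mathbb{Z}/2^{s+1}\mathbb{Z}$, and there is a generator $\sigma$ of $V$ with $\sigma\tau\sigma^{-1}=\tau^{-(2^k+1)}$ for all $\tau\in U$; (4) $p=2$, $H\simeq U\rtimes V$ with $U=\prod_I\mathbb{Z}/2^{s+1}\mathbb{Z}$, $V=\mathbb{Z}/2^{s+1}\mathbb{Z}$, and there is a generator $\sigma$ of $V$ with $\sigma\tau\sigma^{-1}=\tau^{-1}$ for all $\tau\in U$. Then for every $u\in H$ with $u\neq1$ there exists a continuous homomorphism $\rho\colon H\to\mathrm{U}_n(\mathbb{F}_p)$ with $\rho(u)\neq1$.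
   Context: $\mathrm{U}_n(\mathbb{F}_p)$ denotes the group of upper-triangular unipotent $n\times n$ matrices over $\mathbb{F}_p$. *)

theory Defs
  imports "HOL-Algebra.Group" "HOL-Analysis.Analysis"
begin

text \<open>Matrices are functions nat => nat => int, indices 0..n-1, entries in {0..<p}
  (representing F_p = Z/pZ), zero outside the n x n block; multiplication is
  the matrix product reduced mod p.\<close>
definition unitri :: "nat \<Rightarrow> int \<Rightarrow> (nat \<Rightarrow> nat \<Rightarrow> int) monoid" where
  "unitri n p = \<lparr>carrier = {A. (\<forall>i j. A i j \<in> {0..<p})
                              \<and> (\<forall>i j. (n \<le> i \<or> n \<le> j) \<longrightarrow> A i j = 0)
                              \<and> (\<forall>i<n. A i i = 1)
                              \<and> (\<forall>i j. j < i \<longrightarrow> A i j = 0)},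
     monoid.mult = (\<lambda>A B. \<lambda>i j. if i < n \<and> j < n then (\<Sum>l<n. A i l * B l j) mod p else 0),
     one = (\<lambda>i j. if i < n \<and> j < n \<and> i = j then 1 else 0)\<rparr>"

definition cyc_prod :: "int \<Rightarrow> 'i set \<Rightarrow> ('i \<Rightarrow> int) monoid" where
  "cyc_prod m I = \<lparr>carrier = PiE I (\<lambda>_. {0..<m}),
     monoid.mult = (\<lambda>f g. \<lambda>i\<in>I. (f i + g i) mod m),
     one = (\<lambda>i\<in>I. 0)\<rparr>"

definition cyc_prod_top :: "int \<Rightarrow> 'i set \<Rightarrow> ('i \<Rightarrow> int) topology" where
  "cyc_prod_top m I = product_topology (\<lambda>_. discrete_topology {0..<m}) I"

text \<open>Semidirect product U \<rtimes> V, U = prod_I Z/mZ, V = Z/mZ, where the generator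
  1 = sigma of V acts by sigma tau sigma^-1 = tau^c.  The pair (tau, a)
  stands for tau sigma^a.\<close>
definition sdprod :: "int \<Rightarrow> int \<Rightarrow> 'i set \<Rightarrow> (('i \<Rightarrow> int) \<times> int) monoid" where
  "sdprod m c I = \<lparr>carrier = PiE I (\<lambda>_. {0..<m}) \<times> {0..<m},
     monoid.mult = (\<lambda>(f, a) (g, b). ((\<lambda>i\<in>I. (f i + c ^ nat a * g i) mod m), (a + b) mod m)),
     one = ((\<lambda>i\<in>I. 0), 0)\<rparr>"

definition sdprod_top :: "int \<Rightarrow> 'i set \<Rightarrow> (('i \<Rightarrow> int) \<times> int) topology" where
  "sdprod_top m I = prod_topology (cyc_prod_top m I) (discrete_topology {0..<m})"

end

theory Submission
  imports Defs "HOL-Computational_Algebra.Polynomial" "HOL-Computational_Algebra.Primes" "HOL-Number_Theory.Cong"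
begin


definition cg :: "nat \<Rightarrow> int \<Rightarrow> int poly \<Rightarrow> int poly \<Rightarrow> bool" where
  "cg n p a b \<longleftrightarrow> (\<forall>i<n. p dvd coeff a i - coeff b i)"

lemma cg_refl[simp]: "cg n p a a" by (simp add: cg_def)
lemma cg_sym: "cg n p a b \<Longrightarrow> cg n p b a"
  unfolding cg_def by (metis dvd_minus_iff minus_diff_eq)
lemma cg_trans: "cg n p a b \<Longrightarrow> cg n p b c \<Longrightarrow> cg n p a c"
proof -
  assume a: "cg n p a b" and b: "cg n p b c"
  { fix i assume "i < n"
    hence "p dvd (coeff a i - coeff b i) + (coeff b i - coeff c i)"
      using a b by (intro dvd_add) (auto simp: cg_def)
    hence "p dvd coeff a i - coeff c i" by simp }
  thus ?thesis by (simp add: cg_def)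
qed
lemma cg_add: "cg n p a b \<Longrightarrow> cg n p c d \<Longrightarrow> cg n p (a + c) (b + d)"
proof -
  assume a: "cg n p a b" and b: "cg n p c d"
  { fix i assume "i < n"
    hence "p dvd (coeff a i - coeff b i) + (coeff c i - coeff d i)"
      using a b by (simp add: cg_def)
    hence "p dvd coeff (a + c) i - coeff (b + d) i" by (simp add: algebra_simps) }
  thus ?thesis by (simp add: cg_def)
qed
lemma cg_diff: "cg n p a b \<Longrightarrow> cg n p c d \<Longrightarrow> cg n p (a - c) (b - d)"
proof -
  assume a: "cg n p a b" and b: "cg n p c d"
  { fix i assume "i < n"
    hence "p dvd (coeff a i - coeff b i) - (coeff c i - coeff d i)"
      using a b by (simp add: cg_def)
    hence "p dvd coeff (a - c) i - coeff (b - d) i" by (simp add: algebra_simps) }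
  thus ?thesis by (simp add: cg_def)
qed
lemma cg_iff0: "cg n p a b \<longleftrightarrow> cg n p (a - b) 0"
  by (simp add: cg_def)
lemma cg_mult1: "cg n p a b \<Longrightarrow> cg n p (a * w) (b * w)"
proof -
  assume h: "cg n p a b"
  have "p dvd coeff ((a - b) * w) i" if "i < n" for i
    unfolding coeff_mult using h that
    by (intro dvd_sum) (auto simp: cg_def)
  thus ?thesis by (simp add: cg_def algebra_simps)
qed
lemma cg_mult: "cg n p a b \<Longrightarrow> cg n p c d \<Longrightarrow> cg n p (a * c) (b * d)"
  by (metis cg_mult1 cg_trans mult.commute)
lemma cg_power: "cg n p a b \<Longrightarrow> cg n p (a ^ k) (b ^ k)"
  by (induction k) (auto intro: cg_mult)

lemma cg_pcompose0:
  assumes "coeff q 0 = 0"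
  shows "cg n p d 0 \<Longrightarrow> cg n p (pcompose d q) 0"
proof (induction d arbitrary: n)
  case 0 thus ?case by simp
next
  case (pCons e d)
  show ?case
  proof (cases n)
    case 0 thus ?thesis by (simp add: cg_def)
  next
    case (Suc n')
    from pCons.prems have pe: "p dvd e" unfolding Suc cg_def
      by (metis coeff_pCons_0 diff_zero zero_less_Suc coeff_0)
    from pCons.prems have "cg n' p d 0" unfolding Suc cg_def
      by (metis Suc_mono coeff_pCons_Suc coeff_0)
    hence ih: "cg n' p (pcompose d q) 0" by (rule pCons.IH)
    obtain q' where q: "q = pCons 0 q'" using assms by (metis pCons_cases coeff_pCons_0)
    have "cg n' p (q' * pcompose d q) (q' * 0)"
      by (rule cg_mult[OF cg_refl ih])
    hence h2: "cg n' p (q' * pcompose d q) 0" by simp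
    have eq: "pcompose (pCons e d) q = pCons e (q' * pcompose d q)"
      by (simp add: pcompose_pCons q)
    show ?thesis unfolding eq Suc cg_def
    proof (intro allI impI)
      fix i assume "i < Suc n'"
      thus "p dvd coeff (pCons e (q' * pcompose d q)) i - coeff 0 i"
        using pe h2 by (cases i) (auto simp: cg_def)
    qed
  qed
qed

lemma cg_pcompose1:
  assumes "coeff q 0 = 0" "cg n p a b"
  shows "cg n p (pcompose a q) (pcompose b q)"
  using cg_pcompose0[OF assms(1), of n p "a - b"] assms(2)
  by (simp add: cg_iff0[of _ _ a b] cg_iff0[of _ _ "pcompose a q"] pcompose_diff)

lemma cg_pcompose2:
  assumes "cg n p q q'"
  shows "cg n p (pcompose a q) (pcompose a q')"
proof (induction a)
  case 0 thus ?case by simp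
next
  case (pCons e a)
  thus ?case by (simp add: pcompose_pCons cg_add cg_mult assms)
qed


lemma frob:
  fixes a b :: "'a::comm_ring_1"
  assumes "prime p"
  shows "\<exists>W. (a + b) ^ p = a ^ p + b ^ p + of_nat p * W"
proof -
  have p1: "p > 1" using assms prime_gt_1_nat by blast
  have "(a + b) ^ p = (\<Sum>k\<le>p. of_nat (p choose k) * a ^ k * b ^ (p - k))"
    by (rule binomial_ring)
  also have "{..p} = insert 0 (insert p {1..<p})" using p1 by auto
  also have "(\<Sum>k\<in>insert 0 (insert p {1..<p}). of_nat (p choose k) * a ^ k * b ^ (p - k))
      = b ^ p + (a ^ p + (\<Sum>k\<in>{1..<p}. of_nat (p choose k) * a ^ k * b ^ (p - k)))"
    using p1 by (simp add: sum.insert)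
  also have "(\<Sum>k\<in>{1..<p}. of_nat (p choose k) * a ^ k * b ^ (p - k))
      = (\<Sum>k\<in>{1..<p}. of_nat p * (of_nat ((p choose k) div p) * a ^ k * b ^ (p - k)))"
  proof (rule sum.cong)
    fix k assume "k \<in> {1..<p}"
    hence "p dvd (p choose k)" using assms by (intro dvd_choose_prime) auto
    hence "p choose k = p * ((p choose k) div p)" by simp
    hence "(of_nat (p choose k) :: 'a) = of_nat p * of_nat ((p choose k) div p)"
      by (metis of_nat_mult)
    thus "of_nat (p choose k) * a ^ k * b ^ (p - k) = of_nat p * (of_nat ((p choose k) div p) * a ^ k * b ^ (p - k))"
      by (simp add: mult.assoc)
  qed simp
  also have "\<dots> = of_nat p * (\<Sum>k\<in>{1..<p}. of_nat ((p choose k) div p) * a ^ k * b ^ (p - k))"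
    by (simp add: sum_distrib_left)
  finally show ?thesis by (metis add.left_commute add.assoc)
qed

abbreviation xx :: "int poly" where "xx \<equiv> [:1, 1:]"

lemma xx_eq: "xx = 1 + monom 1 1"
  by (simp add: poly_eq_iff coeff_pCons coeff_monom split: nat.split)

lemma xpow:
  assumes "prime p"
  shows "\<exists>W. xx ^ (p ^ j) = 1 + monom 1 (p ^ j) + of_nat p * W"
proof (induction j)
  case 0 show ?case
    by (rule exI[of _ 0]) (simp only: power_0 power_one_right mult_zero_right add_0_right xx_eq)
next
  case (Suc j)
  then obtain W where W: "xx ^ (p ^ j) = 1 + monom 1 (p ^ j) + of_nat p * W" by blast
  obtain W1 where W1: "((1 + monom 1 (p ^ j)) + of_nat p * W) ^ p
      = (1 + monom 1 (p ^ j)) ^ p + (of_nat p * W) ^ p + of_nat p * W1"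
    using frob[OF assms, of "1 + monom 1 (p ^ j)" "of_nat p * W"] by (elim exE)
  obtain W2 where W2: "((1::int poly) + monom 1 (p ^ j)) ^ p
      = 1 ^ p + (monom 1 (p ^ j)) ^ p + of_nat p * W2"
    using frob[OF assms, of "1::int poly" "monom 1 (p ^ j)"] by (elim exE)
  have p0: "p > 0" using assms prime_gt_0_nat by blast
  have pp: "(of_nat p * W) ^ p = of_nat p * (of_nat p ^ (p - 1) * W ^ p)"
  proof -
    have "(of_nat p :: int poly) ^ p = of_nat p * of_nat p ^ (p - 1)"
    proof -
      obtain q where q: "p = Suc q" using p0 gr0_implies_Suc by blast
      show ?thesis by (simp only: q power_Suc diff_Suc_1)
    qed
    thus ?thesis by (simp only: power_mult_distrib mult.assoc)
  qed
  have "xx ^ (p ^ Suc j) = (xx ^ (p ^ j)) ^ p"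
    by (simp only: power_Suc2 power_mult)
  also have "\<dots> = (1 + monom 1 (p ^ j) + of_nat p * W) ^ p" by (simp only: W)
  also have "\<dots> = (1 + monom 1 (p ^ j)) ^ p + (of_nat p * W) ^ p + of_nat p * W1" by (rule W1)
  also have "\<dots> = 1 ^ p + monom 1 (p ^ j) ^ p + of_nat p * W2 + of_nat p * (of_nat p ^ (p - 1) * W ^ p) + of_nat p * W1"
    by (simp only: W2 pp)
  also have "monom 1 (p ^ j) ^ p = (monom 1 (p ^ Suc j) :: int poly)"
    by (simp only: monom_power power_one power_Suc2)
  also have "(1::int poly) ^ p = 1" by (rule power_one)
  finally have "xx ^ (p ^ Suc j) = 1 + monom 1 (p ^ Suc j) + of_nat p * (W2 + of_nat p ^ (p - 1) * W ^ p + W1)"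
    by (simp only: distrib_left add.assoc)
  thus ?case by blast
qed

lemma cg_addp: "cg n (int p) (a + of_nat p * W) a"
  by (simp add: cg_def of_nat_poly)

lemma cg_addp': "cg n (int p) a (a + of_nat p * W)"
  by (rule cg_sym, rule cg_addp)

lemma xm:
  assumes "prime p" "n \<le> p ^ k"
  shows "cg n (int p) (xx ^ (p ^ k)) 1"
proof -
  obtain W where W: "xx ^ (p ^ k) = 1 + monom 1 (p ^ k) + of_nat p * W"
    using xpow[OF assms(1)] by blast
  have "cg n (int p) (1 + monom 1 (p ^ k)) 1"
    using assms(2) by (auto simp: cg_def coeff_monom)
  thus ?thesis unfolding W using cg_addp cg_trans by blast
qed

lemma xps:
  assumes "prime p" "p ^ s < n"
  shows "\<not> cg n (int p) (xx ^ (p ^ s)) 1"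
proof
  assume h: "cg n (int p) (xx ^ (p ^ s)) 1"
  obtain W where W: "xx ^ (p ^ s) = 1 + monom 1 (p ^ s) + of_nat p * W"
    using xpow[OF assms(1)] by blast
  have "p ^ s \<noteq> 0" using assms(1) by (simp add: prime_gt_0_nat)
  hence "int p dvd 1 + int p * coeff W (p ^ s)"
    using h assms(2) unfolding W cg_def by (auto simp: coeff_monom of_nat_poly)
  moreover have "int p dvd int p * coeff W (p ^ s)" by simp
  ultimately have "int p dvd (1 + int p * coeff W (p ^ s)) - int p * coeff W (p ^ s)" by (rule dvd_diff)
  hence "int p dvd 1" by simp
  hence "p dvd 1" by simp
  thus False using assms(1) by simp
qed

lemma x_exp_cong:
  assumes "cg n P (xx ^ m) 1" "e mod m = e' mod m"
  shows "cg n P (xx ^ e) (xx ^ e')"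
proof -
  have *: "cg n P (xx ^ e) (xx ^ (e mod m))" for e
  proof -
    have "xx ^ e = xx ^ (m * (e div m) + e mod m)" by (simp only: mult_div_mod_eq)
    also have "\<dots> = (xx ^ m) ^ (e div m) * xx ^ (e mod m)" by (simp only: power_add power_mult)
    finally have "xx ^ e = (xx ^ m) ^ (e div m) * xx ^ (e mod m)" .
    moreover have "cg n P ((xx ^ m) ^ (e div m) * xx ^ (e mod m)) (1 ^ (e div m) * xx ^ (e mod m))"
      by (intro cg_mult cg_power assms cg_refl)
    ultimately show ?thesis by simp
  qed
  have "cg n P (xx ^ (e mod m)) (xx ^ e')" using cg_sym[OF *[of e']] assms(2) by simp
  thus ?thesis using cg_trans[OF *[of e]] by blast
qed

lemma x_order:
  assumes "prime p" "p ^ s < n" "n \<le> p ^ Suc s" "0 < e" "e < p ^ Suc s"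
  shows "\<not> cg n (int p) (xx ^ e) 1"
proof
  assume h: "cg n (int p) (xx ^ e) 1"
  define m where "m = p ^ Suc s"
  have hm: "cg n (int p) (xx ^ m) 1" unfolding m_def using xm assms by blast
  obtain X Y where XY: "e * X = m * Y + gcd e m" using bezout_nat[of e m] assms by auto
  have "cg n (int p) ((xx ^ e) ^ X) (1 ^ X)" by (intro cg_power h)
  hence c1: "cg n (int p) (xx ^ (e * X)) 1" by (simp add: power_mult)
  have "cg n (int p) ((xx ^ m) ^ Y * xx ^ gcd e m) (1 ^ Y * xx ^ gcd e m)"
    by (intro cg_mult cg_power hm cg_refl)
  hence c2: "cg n (int p) (xx ^ (m * Y + gcd e m)) (xx ^ gcd e m)"
    by (simp add: power_add power_mult)
  have cgg: "cg n (int p) (xx ^ gcd e m) 1" using cg_trans[OF cg_sym[OF c2] c1[unfolded XY]] .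
  have gd: "gcd e m dvd p ^ Suc s" unfolding m_def by (rule gcd_dvd2)
  from divides_primepow[OF assms(1) gd] obtain j where j0: "j \<le> Suc s" "normalize (gcd e m) = p ^ j" .
  hence j: "j \<le> Suc s" "gcd e m = p ^ j" by simp_all
  have "gcd e m \<le> e" using assms(4) by (simp add: gcd_le1_nat)
  hence "p ^ j < p ^ Suc s" using j assms(5) by simp
  hence "j < Suc s" using assms(1) power_less_imp_less_exp prime_gt_1_nat by blast
  hence js: "j \<le> s" by simp
  have "cg n (int p) ((xx ^ (p ^ j)) ^ (p ^ (s - j))) (1 ^ (p ^ (s - j)))"
    using cgg j by (intro cg_power) simp
  moreover have "p ^ j * p ^ (s - j) = p ^ s"
    using js by (simp add: power_add[symmetric])
  hence "(xx ^ (p ^ j)) ^ (p ^ (s - j)) = xx ^ (p ^ s)"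
    by (simp only: power_mult[symmetric])
  ultimately have "cg n (int p) (xx ^ (p ^ s)) 1" by (simp only: power_one)
  thus False using xps[OF assms(1,2)] by blast
qed



definition Qp :: "nat \<Rightarrow> int poly" where "Qp c = xx ^ c - 1"
definition Lm :: "nat \<Rightarrow> nat \<Rightarrow> int poly \<Rightarrow> int poly" where
  "Lm e c w = xx ^ e * pcompose w (Qp c)"

lemma pcompose_power_left: "pcompose (a ^ k) q = (pcompose a q) ^ k"
  by (induction k) (simp_all add: pcompose_mult pcompose_1)

lemma pcompose_xx: "pcompose xx q = 1 + q"
  by (simp add: pcompose_pCons smult_1_left)

lemma pcompose_X: "pcompose [:0, 1:] (q::int poly) = q"
  by (simp add: pcompose_pCons smult_1_left)

lemma pcompose_monom1: "pcompose (monom 1 k) (q::int poly) = q ^ k"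
  by (simp add: monom_altdef pcompose_power_left pcompose_X smult_1_left)

lemma coeff_xx_pow0: "coeff (xx ^ c) 0 = 1"
  by (induction c) auto

lemma xx_mult: "xx * w = w + pCons 0 w" by simp

lemma coeff_xx_pow1: "coeff (xx ^ c) 1 = int c"
proof (induction c)
  case 0 thus ?case by simp
next
  case (Suc c)
  have "coeff (xx ^ Suc c) 1 = coeff (xx ^ c) 1 + coeff (xx ^ c) 0"
    by (simp only: power_Suc xx_mult coeff_add coeff_pCons_Suc One_nat_def)
  thus ?case using Suc by (simp add: coeff_xx_pow0)
qed

lemma coeff_Qp0: "coeff (Qp c) 0 = 0"
  by (simp add: Qp_def coeff_xx_pow0)

lemma Lm_comp: "Lm e1 c1 (Lm e2 c2 w) = Lm (e1 + c1 * e2) (c1 * c2) w"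
proof -
  have a: "pcompose xx (Qp c1) = xx ^ c1" by (simp add: pcompose_xx Qp_def)
  have b: "pcompose (Qp c2) (Qp c1) = Qp (c1 * c2)"
    unfolding Qp_def pcompose_diff pcompose_power_left pcompose_1 pcompose_xx
    by (simp add: power_mult)
  show ?thesis
    unfolding Lm_def pcompose_mult pcompose_power_left a
    by (simp add: pcompose_assoc[symmetric] b power_add power_mult mult.assoc)
qed

lemma Lm_cong:
  assumes "cg n P (xx ^ m) 1" "e mod m = e' mod m" "c mod m = c' mod m"
  shows "cg n P (Lm e c w) (Lm e' c' w)"
proof -
  have "cg n P (Qp c) (Qp c')" unfolding Qp_def
    by (intro cg_diff x_exp_cong[OF assms(1)] assms(3) cg_refl)
  hence "cg n P (pcompose w (Qp c)) (pcompose w (Qp c'))" by (rule cg_pcompose2)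
  thus ?thesis unfolding Lm_def by (intro cg_mult x_exp_cong[OF assms(1) assms(2)])
qed

lemma Lm_resp: "cg n P a b \<Longrightarrow> cg n P (Lm e c a) (Lm e c b)"
  unfolding Lm_def by (intro cg_mult cg_refl cg_pcompose1 coeff_Qp0)

lemma Lm_sum: "Lm e c (\<Sum>l<n. monom (a l) l) = (\<Sum>l<n. smult (a l) (Lm e c (monom 1 l)))"
proof -
  have "monom (a l) l = smult (a l) (monom 1 l)" for l by (simp add: smult_monom)
  thus ?thesis unfolding Lm_def pcompose_sum sum_distrib_left
    by (simp add: pcompose_smult mult_smult_right)
qed

lemma trunc_cg: "cg n P (\<Sum>l<n. monom (coeff w l) l) w"
  by (simp add: cg_def coeff_sum coeff_monom)

lemma Lm_monom_shape: "\<exists>r. coeff r 0 = int c \<and> Lm e c (monom 1 k) = monom 1 k * (xx ^ e * r ^ k)"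
proof -
  obtain a r where ar: "Qp c = pCons a r" by (rule pCons_cases)
  have "a = 0" using coeff_Qp0[of c] ar by simp
  have "coeff r 0 = coeff (Qp c) 1" using ar by simp
  also have "\<dots> = int c" using coeff_xx_pow1[of c] by (simp add: Qp_def)
  finally have r0: "coeff r 0 = int c" .
  have "Qp c = monom 1 1 * r" using ar \<open>a = 0\<close> by (simp add: monom_Suc)
  hence "Lm e c (monom 1 k) = xx ^ e * (monom 1 1 * r) ^ k"
    by (simp add: Lm_def pcompose_monom1)
  also have "\<dots> = monom 1 k * (xx ^ e * r ^ k)"
    by (simp add: power_mult_distrib monom_power mult_ac)
  finally show ?thesis using r0 by blast
qed

lemma coeff_Lm_low: "i < k \<Longrightarrow> coeff (Lm e c (monom 1 k)) i = 0"
  using Lm_monom_shape[of c e k] by (auto simp: coeff_monom_mult)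

lemma coeff_Lm_diag: "coeff (Lm e c (monom 1 k)) k = int c ^ k"
proof -
  obtain r where r: "coeff r 0 = int c" "Lm e c (monom 1 k) = monom 1 k * (xx ^ e * r ^ k)"
    using Lm_monom_shape by blast
  have "coeff (Lm e c (monom 1 k)) k = coeff (xx ^ e * r ^ k) 0"
    using r(2) by (simp add: coeff_monom_mult)
  also have "\<dots> = poly (xx ^ e * r ^ k) 0" by (simp add: poly_0_coeff_0)
  also have "\<dots> = int c ^ k"
  proof -
    have "poly r 0 = int c" using r(1) by (simp add: poly_0_coeff_0)
    thus ?thesis by (simp add: poly_power)
  qed
  finally show ?thesis .
qed

lemma sum_mod_mult:
  fixes f g :: "nat \<Rightarrow> int"
  shows "(\<Sum>l\<in>A. (f l mod P) * (g l mod P)) mod P = (\<Sum>l\<in>A. f l * g l) mod P"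
proof -
  have "(\<Sum>l\<in>A. (f l mod P) * (g l mod P)) mod P = (\<Sum>l\<in>A. ((f l mod P) * (g l mod P)) mod P) mod P"
    by (rule mod_sum_eq[symmetric])
  also have "\<dots> = (\<Sum>l\<in>A. (f l * g l) mod P) mod P" by (simp only: mod_mult_eq)
  also have "\<dots> = (\<Sum>l\<in>A. f l * g l) mod P" by (rule mod_sum_eq)
  finally show ?thesis .
qed

definition matL :: "nat \<Rightarrow> int \<Rightarrow> nat \<Rightarrow> nat \<Rightarrow> nat \<Rightarrow> nat \<Rightarrow> int" where
  "matL n P e c = (\<lambda>i j. if i < n \<and> j < n then coeff (Lm e c (monom 1 (n - 1 - j))) (n - 1 - i) mod P else 0)"

lemma matL_carrier:
  assumes "P > 1" "int c mod P = 1"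
  shows "matL n P e c \<in> carrier (unitri n P)"
proof -
  have d: "int c ^ k mod P = 1" for k
  proof -
    have "int c ^ k mod P = (int c mod P) ^ k mod P" by (simp add: power_mod)
    thus ?thesis using assms by simp
  qed
  show ?thesis unfolding unitri_def matL_def
    using assms d by (auto simp: coeff_Lm_diag coeff_Lm_low)
qed

lemma matL_mult:
  assumes "P > 0" "cg n P (xx ^ m) 1" "(e1 + c1 * e2) mod m = e3 mod m" "(c1 * c2) mod m = c3 mod m"
  shows "(\<lambda>i j. if i < n \<and> j < n then (\<Sum>l<n. matL n P e1 c1 i l * matL n P e2 c2 l j) mod P else 0)
       = matL n P e3 c3"
proof (intro ext)
  fix i j
  show "(if i < n \<and> j < n then (\<Sum>l<n. matL n P e1 c1 i l * matL n P e2 c2 l j) mod P else 0)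
       = matL n P e3 c3 i j"
  proof (cases "i < n \<and> j < n")
    case False thus ?thesis by (auto simp: matL_def)
  next
    case True
    define I where "I = n - 1 - i"
    define J where "J = n - 1 - j"
    have I: "I < n" using True by (simp add: I_def)
    define w where "w = Lm e2 c2 (monom 1 J)"
    define a where "a l = coeff (Lm e1 c1 (monom 1 l)) I" for l
    have "(\<Sum>l<n. matL n P e1 c1 i l * matL n P e2 c2 l j) mod P
        = (\<Sum>l<n. (a (n - 1 - l) mod P) * (coeff w (n - 1 - l) mod P)) mod P"
    proof -
      have "matL n P e1 c1 i l * matL n P e2 c2 l j = (a (n - 1 - l) mod P) * (coeff w (n - 1 - l) mod P)"
        if "l < n" for l
        using True that unfolding matL_def a_def w_def I_def J_def by simp
      thus ?thesis by simp
    qed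
    also have "\<dots> = (\<Sum>l<n. a (n - 1 - l) * coeff w (n - 1 - l)) mod P"
      by (rule sum_mod_mult)
    also have "(\<Sum>l<n. a (n - 1 - l) * coeff w (n - 1 - l)) = (\<Sum>l<n. a l * coeff w l)"
      using sum.nat_diff_reindex[of "\<lambda>l. a l * coeff w l" n] by simp
    also have "(\<Sum>l<n. a l * coeff w l) = coeff (Lm e1 c1 (\<Sum>l<n. monom (coeff w l) l)) I"
      by (simp add: Lm_sum coeff_sum a_def mult.commute)
    also have "\<dots> mod P = coeff (Lm e1 c1 w) I mod P"
    proof -
      have "cg n P (Lm e1 c1 (\<Sum>l<n. monom (coeff w l) l)) (Lm e1 c1 w)"
        by (intro Lm_resp trunc_cg)
      thus ?thesis using I by (simp add: cg_def mod_eq_dvd_iff)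
    qed
    also have "\<dots> = coeff (Lm e3 c3 (monom 1 J)) I mod P"
    proof -
      have "cg n P (Lm e1 c1 w) (Lm e3 c3 (monom 1 J))"
        unfolding w_def Lm_comp by (rule Lm_cong[OF assms(2-4)])
      thus ?thesis using I by (simp add: cg_def mod_eq_dvd_iff)
    qed
    also have "\<dots> = matL n P e3 c3 i j" using True by (simp add: matL_def I_def J_def)
    finally show ?thesis using True by simp
  qed
qed

lemma matL_not_one:
  assumes "P > 1" "n > 0" "\<not> cg n P (xx ^ e) 1"
  shows "matL n P e c \<noteq> one (unitri n P)"
proof
  assume h: "matL n P e c = one (unitri n P)"
  have "P dvd coeff (xx ^ e) I - coeff 1 I" if "I < n" for I
  proof -
    have "matL n P e c (n - 1 - I) (n - 1) = one (unitri n P) (n - 1 - I) (n - 1)" using h by simp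
    hence "coeff (xx ^ e) I mod P = (if I = 0 then 1 else 0)"
      using that assms(2) by (auto simp: matL_def unitri_def Lm_def pcompose_1 dvd_eq_mod_eq_0 split: if_splits)
    moreover have "coeff (1::int poly) I mod P = (if I = 0 then 1 else 0)"
      using assms(1) by (simp add: coeff_1)
    ultimately show ?thesis by (simp add: mod_eq_dvd_iff[symmetric])
  qed
  thus False using assms(3) by (simp add: cg_def)
qed



lemma transfer:
  fixes G :: "'b monoid" and H :: "'a monoid" and U :: "'u monoid"
  assumes grpH: "group H"
    and iso: "\<phi> \<in> iso G H" and hm: "homeomorphic_map T TH \<phi>"
    and top: "topspace T = carrier G"
    and one_in: "\<one>\<^bsub>G\<^esub> \<in> carrier G" and one_mult: "\<one>\<^bsub>G\<^esub> \<otimes>\<^bsub>G\<^esub> \<one>\<^bsub>G\<^esub> = \<one>\<^bsub>G\<^esub>"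
    and closed: "\<And>x y. x \<in> carrier G \<Longrightarrow> y \<in> carrier G \<Longrightarrow> x \<otimes>\<^bsub>G\<^esub> y \<in> carrier G"
    and sep: "\<And>g. g \<in> carrier G \<Longrightarrow> g \<noteq> \<one>\<^bsub>G\<^esub> \<Longrightarrow>
       \<exists>\<psi> \<in> hom G U. continuous_map T (discrete_topology (carrier U)) \<psi> \<and> \<psi> g \<noteq> \<one>\<^bsub>U\<^esub>"
  shows "\<forall>u \<in> carrier H. u \<noteq> \<one>\<^bsub>H\<^esub> \<longrightarrow>
           (\<exists>\<rho> \<in> hom H U. continuous_map TH (discrete_topology (carrier U)) \<rho> \<and> \<rho> u \<noteq> \<one>\<^bsub>U\<^esub>)"
proof (intro ballI impI)
  fix u assume u: "u \<in> carrier H" "u \<noteq> \<one>\<^bsub>H\<^esub>"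
  have bij: "bij_betw \<phi> (carrier G) (carrier H)" and hom: "\<phi> \<in> hom G H"
    using iso by (auto simp: iso_def)
  have phim: "\<phi> (x \<otimes>\<^bsub>G\<^esub> y) = \<phi> x \<otimes>\<^bsub>H\<^esub> \<phi> y" if "x \<in> carrier G" "y \<in> carrier G" for x y
    using hom that by (auto simp: hom_def)
  have phic: "\<phi> x \<in> carrier H" if "x \<in> carrier G" for x
    using bij that bij_betwE by blast
  define iv where "iv = inv_into (carrier G) \<phi>"
  have iv: "iv y \<in> carrier G" "\<phi> (iv y) = y" if "y \<in> carrier H" for y
    using bij that unfolding iv_def
    by (auto simp: bij_betw_def inv_into_into f_inv_into_f)
  have ivphi: "iv (\<phi> x) = x" if "x \<in> carrier G" for x
    using bij that unfolding iv_def by (simp add: bij_betw_def inv_into_f_f)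
  have phi1: "\<phi> \<one>\<^bsub>G\<^esub> = \<one>\<^bsub>H\<^esub>"
  proof -
    have "\<phi> \<one>\<^bsub>G\<^esub> \<otimes>\<^bsub>H\<^esub> \<phi> \<one>\<^bsub>G\<^esub> = \<phi> \<one>\<^bsub>G\<^esub>"
      using phim[OF one_in one_in] one_mult by simp
    thus ?thesis using group.l_cancel_one[OF grpH phic[OF one_in] phic[OF one_in]] by simp
  qed
  define g where "g = iv u"
  have g: "g \<in> carrier G" "\<phi> g = u" using iv u(1) by (auto simp: g_def)
  have "g \<noteq> \<one>\<^bsub>G\<^esub>" using g phi1 u(2) by auto
  then obtain \<psi> where psi: "\<psi> \<in> hom G U" "continuous_map T (discrete_topology (carrier U)) \<psi>"
      "\<psi> g \<noteq> \<one>\<^bsub>U\<^esub>"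
    using sep g(1) by blast
  define \<rho> where "\<rho> = (\<lambda>y. \<psi> (iv y))"
  have "\<rho> \<in> hom H U"
  proof (unfold hom_def, intro CollectI conjI ballI)
    show "\<rho> \<in> carrier H \<rightarrow> carrier U"
      using psi(1) iv by (auto simp: \<rho>_def hom_def)
  next
    fix x y assume xy: "x \<in> carrier H" "y \<in> carrier H"
    have "\<phi> (iv x \<otimes>\<^bsub>G\<^esub> iv y) = x \<otimes>\<^bsub>H\<^esub> y" using phim iv xy by simp
    hence "iv (x \<otimes>\<^bsub>H\<^esub> y) = iv x \<otimes>\<^bsub>G\<^esub> iv y"
      using ivphi[OF closed[OF iv(1)[OF xy(1)] iv(1)[OF xy(2)]]] by simp
    thus "\<rho> (x \<otimes>\<^bsub>H\<^esub> y) = \<rho> x \<otimes>\<^bsub>U\<^esub> \<rho> y"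
      using psi(1) iv xy by (simp add: \<rho>_def hom_def)
  qed
  moreover have "continuous_map TH (discrete_topology (carrier U)) \<rho>"
  proof -
    obtain g' where g': "homeomorphic_maps T TH \<phi> g'" using hm homeomorphic_map_maps by blast
    hence cg': "continuous_map TH T g'" and
      gf: "\<And>y. y \<in> topspace TH \<Longrightarrow> \<phi> (g' y) = y" and
      gin: "\<And>y. y \<in> topspace TH \<Longrightarrow> g' y \<in> topspace T"
      by (auto simp: homeomorphic_maps_def continuous_map_def)
    have "continuous_map TH (discrete_topology (carrier U)) (\<psi> \<circ> g')"
      by (rule continuous_map_compose[OF cg' psi(2)])
    moreover have "(\<psi> \<circ> g') y = \<rho> y" if "y \<in> topspace TH" for y
    proof -
      have "g' y \<in> carrier G" using gin[OF that] top by simp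
      hence "iv y = g' y" using ivphi gf[OF that] by metis
      thus ?thesis by (simp add: \<rho>_def)
    qed
    ultimately show ?thesis using continuous_map_eq by blast
  qed
  moreover have "\<rho> u \<noteq> \<one>\<^bsub>U\<^esub>" using psi(3) by (simp add: \<rho>_def g_def)
  ultimately show "\<exists>\<rho> \<in> hom H U. continuous_map TH (discrete_topology (carrier U)) \<rho> \<and> \<rho> u \<noteq> \<one>\<^bsub>U\<^esub>"
    by blast
qed



lemma nat_mod_int:
  assumes "mm > 0" "int a mod int mm = z mod int mm"
  shows "a mod mm = nat (z mod int mm) mod mm"
proof -
  have z0: "0 \<le> z mod int mm" "z mod int mm < int mm" using assms(1) by simp_all
  have "int (a mod mm) = z mod int mm" using assms(2) by (simp add: of_nat_mod)
  hence "a mod mm = nat (z mod int mm)" by simp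
  moreover have "nat (z mod int mm) mod mm = nat (z mod int mm)"
    using z0 by (intro mod_less) simp
  ultimately show ?thesis by simp
qed

lemma unitri_mult: "A \<otimes>\<^bsub>unitri n P\<^esub> B = (\<lambda>i j. if i < n \<and> j < n then (\<Sum>l<n. A i l * B l j) mod P else 0)"
  by (simp add: unitri_def)

lemma n_bounds:
  assumes "prime p" "n = p ^ s + 1"
  shows "p ^ s < n" "n \<le> p ^ Suc s" "n > 0" "int p > 1"
proof -
  have p2: "p \<ge> 2" using assms(1) prime_ge_2_nat by blast
  have "p ^ s \<ge> 1" using p2 by simp
  hence "p ^ s + 1 \<le> 2 * p ^ s" by simp
  also have "\<dots> \<le> p * p ^ s" using p2 by (intro mult_right_mono) auto
  finally show "n \<le> p ^ Suc s" using assms(2) by simp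
  show "p ^ s < n" "n > 0" "int p > 1" using assms p2 by auto
qed

lemma cyc_case:
  fixes H :: "'a monoid" and I :: "'i set"
  assumes "prime p" "n = p ^ s + 1" "group H"
    "\<phi> \<in> iso (cyc_prod (int p ^ (s+1)) I) H"
    "homeomorphic_map (cyc_prod_top (int p ^ (s+1)) I) TH \<phi>"
  shows "\<forall>u \<in> carrier H. u \<noteq> \<one>\<^bsub>H\<^esub> \<longrightarrow>
           (\<exists>\<rho> \<in> hom H (unitri n (int p)).
              continuous_map TH (discrete_topology (carrier (unitri n (int p)))) \<rho>
              \<and> \<rho> u \<noteq> \<one>\<^bsub>unitri n (int p)\<^esub>)"
proof -
  define mm where "mm = p ^ Suc s"
  define M where "M = int p ^ (s+1)"
  have M: "M = int mm" by (simp add: M_def mm_def)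
  have nb: "p ^ s < n" "n \<le> p ^ Suc s" "n > 0" "int p > 1" using n_bounds[OF assms(1,2)] by auto
  have mm0: "mm > 0" using assms(1) by (simp add: mm_def prime_gt_0_nat)
  have xm': "cg n (int p) (xx ^ mm) 1" unfolding mm_def using xm[OF assms(1) nb(2)] .
  let ?U = "unitri n (int p)"
  let ?G = "cyc_prod M I"
  have carr: "carrier ?G = PiE I (\<lambda>_. {0..<M})" by (simp add: cyc_prod_def)
  show ?thesis unfolding M_def[symmetric]
  proof (rule transfer[OF assms(3) assms(4)[folded M_def] assms(5)[folded M_def]])
    show "topspace (cyc_prod_top M I) = carrier ?G"
      by (simp add: cyc_prod_top_def cyc_prod_def)
    show "\<one>\<^bsub>?G\<^esub> \<in> carrier ?G" using mm0 by (simp add: cyc_prod_def M)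
    show "\<one>\<^bsub>?G\<^esub> \<otimes>\<^bsub>?G\<^esub> \<one>\<^bsub>?G\<^esub> = \<one>\<^bsub>?G\<^esub>" by (auto simp: cyc_prod_def intro!: restrict_ext)
    show "x \<otimes>\<^bsub>?G\<^esub> y \<in> carrier ?G" if "x \<in> carrier ?G" "y \<in> carrier ?G" for x y
      using mm0 by (auto simp: cyc_prod_def M)
  next
    fix g assume g: "g \<in> carrier ?G" "g \<noteq> \<one>\<^bsub>?G\<^esub>"
    obtain i where i: "i \<in> I" "g i \<noteq> 0"
    proof -
      have "\<exists>i\<in>I. g i \<noteq> 0"
      proof (rule ccontr)
        assume "\<not> (\<exists>i\<in>I. g i \<noteq> 0)"
        hence "g = (\<lambda>i\<in>I. 0)" using g(1) by (auto simp: carr PiE_def extensional_def)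
        thus False using g(2) by (simp add: cyc_prod_def)
      qed
      thus ?thesis using that by blast
    qed
    define \<Phi> where "\<Phi> = (\<lambda>k::int. matL n (int p) (nat k) 1)"
    define \<psi> where "\<psi> = (\<lambda>f::'i \<Rightarrow> int. \<Phi> (f i))"
    have Phic: "\<Phi> k \<in> carrier ?U" for k
      unfolding \<Phi>_def using nb(4) by (intro matL_carrier) auto
    have "\<psi> \<in> hom ?G ?U"
    proof (unfold hom_def, intro CollectI conjI ballI)
      show "\<psi> \<in> carrier ?G \<rightarrow> carrier ?U" using Phic by (simp add: \<psi>_def)
    next
      fix x y assume xy: "x \<in> carrier ?G" "y \<in> carrier ?G"
      have x0: "0 \<le> x i" "0 \<le> y i" using xy i(1) by (auto simp: carr PiE_def Pi_def)
      have "\<psi> (x \<otimes>\<^bsub>?G\<^esub> y) = matL n (int p) (nat ((x i + y i) mod int mm)) 1"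
        using i(1) by (simp add: \<psi>_def \<Phi>_def cyc_prod_def M)
      also have "\<dots> = \<psi> x \<otimes>\<^bsub>?U\<^esub> \<psi> y"
        unfolding unitri_mult \<psi>_def \<Phi>_def
      proof (rule matL_mult[symmetric, OF _ xm'])
        show "int p > 0" using nb(4) by simp
        show "(nat (x i) + 1 * nat (y i)) mod mm = nat ((x i + y i) mod int mm) mod mm"
          using x0 mm0 by (intro nat_mod_int) auto
        show "1 * 1 mod mm = 1 mod mm" by simp
      qed
      finally show "\<psi> (x \<otimes>\<^bsub>?G\<^esub> y) = \<psi> x \<otimes>\<^bsub>?U\<^esub> \<psi> y" .
    qed
    moreover have "continuous_map (cyc_prod_top M I) (discrete_topology (carrier ?U)) \<psi>"
    proof -
      have a: "continuous_map (cyc_prod_top M I) (discrete_topology {0..<M}) (\<lambda>f. f i)"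
        unfolding cyc_prod_top_def by (rule continuous_map_product_projection[OF i(1)])
      have b: "continuous_map (discrete_topology {0..<M}) (discrete_topology (carrier ?U)) \<Phi>"
        using Phic by simp
      have "\<psi> = \<Phi> \<circ> (\<lambda>f. f i)" by (simp add: \<psi>_def o_def)
      thus ?thesis using continuous_map_compose[OF a b] by simp
    qed
    moreover have "\<psi> g \<noteq> \<one>\<^bsub>?U\<^esub>"
    proof -
      have "g i \<in> {0..<M}" using g(1) i(1) carr by (auto simp: PiE_def Pi_def)
      hence gi: "0 \<le> g i" "g i < int mm" by (auto simp: M)
      have "0 < nat (g i)" using gi i(2) by simp
      have "nat (g i) < mm" using gi by (simp add: nat_less_iff)
      hence "nat (g i) < p ^ Suc s" by (simp only: mm_def)
      hence "\<not> cg n (int p) (xx ^ nat (g i)) 1" using x_order[OF assms(1) nb(1,2)] \<open>0 < nat (g i)\<close> by blast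
      thus ?thesis unfolding \<psi>_def \<Phi>_def using matL_not_one nb by blast
    qed
    ultimately show "\<exists>\<psi>\<in>hom ?G ?U. continuous_map (cyc_prod_top M I) (discrete_topology (carrier ?U)) \<psi>
         \<and> \<psi> g \<noteq> \<one>\<^bsub>?U\<^esub>" by blast
  qed
qed

lemma lift_pow:
  fixes c :: int
  assumes "prime p" "int p dvd c - 1"
  shows "int p ^ Suc j dvd c ^ (p ^ j) - 1"
proof (induction j)
  case 0 thus ?case using assms(2) by simp
next
  case (Suc j)
  define z where "z = c ^ (p ^ j)"
  have zp: "c ^ (p ^ Suc j) = z ^ p" by (simp only: z_def power_Suc2 power_mult)
  have fac: "z ^ p - 1 = (z - 1) * (\<Sum>i<p. z ^ i)" by (rule power_diff_1_eq)
  have "int p dvd int p ^ Suc j" by simp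
  hence "int p dvd z - 1" using Suc.IH z_def dvd_trans by blast
  hence "[z = 1] (mod int p)" by (simp add: cong_iff_dvd_diff)
  hence "[(\<Sum>i<p. z ^ i) = (\<Sum>i<p. 1 ^ i)] (mod int p)"
    by (intro cong_sum cong_pow) auto
  hence "[(\<Sum>i<p. z ^ i) = int p] (mod int p)" by simp
  moreover have "[int p = 0] (mod int p)" by (simp add: cong_0_iff)
  ultimately have "[(\<Sum>i<p. z ^ i) = 0] (mod int p)" by (rule cong_trans)
  hence "int p dvd (\<Sum>i<p. z ^ i)" by (simp add: cong_0_iff)
  hence "int p ^ Suc j * int p dvd (z - 1) * (\<Sum>i<p. z ^ i)"
    using Suc.IH z_def by (intro mult_dvd_mono) auto
  thus ?case unfolding zp fac[symmetric] by (simp only: power_Suc2)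
qed

lemma cpow_reduce:
  fixes c :: int
  assumes "prime p" "int p dvd c - 1"
  shows "c ^ (E mod p ^ Suc s) mod (int p ^ Suc s) = c ^ E mod (int p ^ Suc s)"
proof -
  let ?M = "int p ^ Suc s"
  let ?m = "p ^ Suc s"
  have "?M dvd int p ^ Suc (Suc s)" by (simp add: le_imp_power_dvd)
  hence "?M dvd c ^ ?m - 1" using lift_pow[OF assms, of "Suc s"] dvd_trans by blast
  hence cm: "[c ^ ?m = 1] (mod ?M)" by (simp add: cong_iff_dvd_diff)
  have "c ^ E = c ^ (?m * (E div ?m) + E mod ?m)" by (simp only: mult_div_mod_eq)
  also have "\<dots> = (c ^ ?m) ^ (E div ?m) * c ^ (E mod ?m)" by (simp only: power_add power_mult)
  finally have e: "c ^ E = (c ^ ?m) ^ (E div ?m) * c ^ (E mod ?m)" .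
  have "[(c ^ ?m) ^ (E div ?m) * c ^ (E mod ?m) = 1 ^ (E div ?m) * c ^ (E mod ?m)] (mod ?M)"
    by (intro cong_mult cong_pow cm cong_refl)
  hence "[c ^ E = c ^ (E mod ?m)] (mod ?M)" unfolding e by simp
  thus ?thesis by (simp add: cong_def)
qed

lemma mod_add_mult_helper:
  fixes f x y M :: int
  shows "(f + (x mod M) * y) mod M = (f + x * y) mod M"
proof -
  have "(f + (x mod M) * y) mod M = (f + ((x mod M) * y) mod M) mod M" by (simp add: mod_add_right_eq)
  also have "\<dots> = (f + (x * y) mod M) mod M" by (simp only: mod_mult_left_eq)
  also have "\<dots> = (f + x * y) mod M" by (simp add: mod_add_right_eq)
  finally show ?thesis .
qed

lemma sd_case:
  fixes H :: "'a monoid" and I :: "'i set" and c :: int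
  assumes "prime p" "n = p ^ s + 1" "group H" "int p dvd c - 1"
    "\<phi> \<in> iso (sdprod (int p ^ (s+1)) c I) H"
    "homeomorphic_map (sdprod_top (int p ^ (s+1)) I) TH \<phi>"
  shows "\<forall>u \<in> carrier H. u \<noteq> \<one>\<^bsub>H\<^esub> \<longrightarrow>
           (\<exists>\<rho> \<in> hom H (unitri n (int p)).
              continuous_map TH (discrete_topology (carrier (unitri n (int p)))) \<rho>
              \<and> \<rho> u \<noteq> \<one>\<^bsub>unitri n (int p)\<^esub>)"
proof -
  define mm where "mm = p ^ Suc s"
  define M where "M = int p ^ (s+1)"
  have M: "M = int mm" by (simp add: M_def mm_def)
  have nb: "p ^ s < n" "n \<le> p ^ Suc s" "n > 0" "int p > 1" using n_bounds[OF assms(1,2)] by auto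
  have mm0: "mm > 0" using assms(1) by (simp add: mm_def prime_gt_0_nat)
  have M0: "M > 0" using mm0 M by simp
  have xm': "cg n (int p) (xx ^ mm) 1" unfolding mm_def using xm[OF assms(1) nb(2)] .
  let ?U = "unitri n (int p)"
  let ?G = "sdprod M c I"
  let ?T = "sdprod_top M I"
  have carr: "carrier ?G = PiE I (\<lambda>_. {0..<M}) \<times> {0..<M}" by (simp add: sdprod_def)
  have multG: "x \<otimes>\<^bsub>?G\<^esub> y = ((\<lambda>i\<in>I. (fst x i + c ^ nat (snd x) * fst y i) mod M), (snd x + snd y) mod M)"
    for x y by (cases x; cases y) (simp add: sdprod_def)
  have oneG: "\<one>\<^bsub>?G\<^esub> = ((\<lambda>i\<in>I. 0), 0)" by (simp add: sdprod_def)
  have carrI: "fst x i \<in> {0..<M}" "snd x \<in> {0..<M}" if "x \<in> carrier ?G" "i \<in> I" for x i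
    using that by (auto simp: carr PiE_def Pi_def)
  have Pdiv: "int p dvd M" unfolding M_def by simp
  have cmod: "c mod int p = 1"
  proof -
    have "[c = 1] (mod int p)" using assms(4) by (simp add: cong_iff_dvd_diff)
    thus ?thesis using nb(4) by (simp add: cong_def)
  qed
  have cpowmod: "int (nat (c ^ k mod M)) mod int p = 1" for k
  proof -
    have "int (nat (c ^ k mod M)) = c ^ k mod M" using M0 by simp
    also have "\<dots> mod int p = c ^ k mod int p" using Pdiv by (simp add: mod_mod_cancel)
    also have "\<dots> = (c mod int p) ^ k mod int p" by (simp add: power_mod)
    also have "\<dots> = 1" using cmod nb(4) by simp
    finally show ?thesis .
  qed
  have Pp: "int p > 0" using nb(4) by simp
  show ?thesis unfolding M_def[symmetric]
  proof (rule transfer[OF assms(3) assms(5)[folded M_def] assms(6)[folded M_def]])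
    show "topspace ?T = carrier ?G"
      by (simp add: sdprod_top_def cyc_prod_top_def sdprod_def)
    show "\<one>\<^bsub>?G\<^esub> \<in> carrier ?G" using M0 by (simp add: sdprod_def)
    show "\<one>\<^bsub>?G\<^esub> \<otimes>\<^bsub>?G\<^esub> \<one>\<^bsub>?G\<^esub> = \<one>\<^bsub>?G\<^esub>"
      unfolding multG oneG by (auto intro!: restrict_ext)
    show "x \<otimes>\<^bsub>?G\<^esub> y \<in> carrier ?G" if "x \<in> carrier ?G" "y \<in> carrier ?G" for x y
      unfolding multG carr using M0 by auto
  next
    fix g assume g: "g \<in> carrier ?G" "g \<noteq> \<one>\<^bsub>?G\<^esub>"
    show "\<exists>\<psi>\<in>hom ?G ?U. continuous_map ?T (discrete_topology (carrier ?U)) \<psi> \<and> \<psi> g \<noteq> \<one>\<^bsub>?U\<^esub>"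
    proof (cases "snd g = 0")
      case False
      define \<Phi> where "\<Phi> = (\<lambda>k::int. matL n (int p) (nat k) 1)"
      define \<psi> where "\<psi> = (\<lambda>z::('i \<Rightarrow> int) \<times> int. \<Phi> (snd z))"
      have Phic: "\<Phi> k \<in> carrier ?U" for k
        unfolding \<Phi>_def using nb(4) by (intro matL_carrier) auto
      have "\<psi> \<in> hom ?G ?U"
      proof (unfold hom_def, intro CollectI conjI ballI)
        show "\<psi> \<in> carrier ?G \<rightarrow> carrier ?U" using Phic by (simp add: \<psi>_def)
      next
        fix x y assume xy: "x \<in> carrier ?G" "y \<in> carrier ?G"
        have x0: "0 \<le> snd x" "0 \<le> snd y" using xy carr by auto
        have "\<psi> (x \<otimes>\<^bsub>?G\<^esub> y) = matL n (int p) (nat ((snd x + snd y) mod int mm)) 1"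
          unfolding \<psi>_def \<Phi>_def multG by (simp add: M)
        also have "\<dots> = \<psi> x \<otimes>\<^bsub>?U\<^esub> \<psi> y"
          unfolding unitri_mult \<psi>_def \<Phi>_def
        proof (rule matL_mult[symmetric, OF _ xm'])
          show "int p > 0" using Pp .
          show "(nat (snd x) + 1 * nat (snd y)) mod mm = nat ((snd x + snd y) mod int mm) mod mm"
            using x0 mm0 by (intro nat_mod_int) auto
          show "1 * 1 mod mm = 1 mod mm" by simp
        qed
        finally show "\<psi> (x \<otimes>\<^bsub>?G\<^esub> y) = \<psi> x \<otimes>\<^bsub>?U\<^esub> \<psi> y" .
      qed
      moreover have "continuous_map ?T (discrete_topology (carrier ?U)) \<psi>"
      proof -
        have a: "continuous_map ?T (discrete_topology {0..<M}) snd"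
          unfolding sdprod_top_def by (rule continuous_map_snd)
        have b: "continuous_map (discrete_topology {0..<M}) (discrete_topology (carrier ?U)) \<Phi>"
          using Phic by simp
        have "\<psi> = \<Phi> \<circ> snd" by (simp add: \<psi>_def o_def)
        thus ?thesis using continuous_map_compose[OF a b] by simp
      qed
      moreover have "\<psi> g \<noteq> \<one>\<^bsub>?U\<^esub>"
      proof -
        have "snd g \<in> {0..<M}" using g(1) carr by auto
        hence gi: "0 \<le> snd g" "snd g < int mm" by (auto simp: M)
        have "0 < nat (snd g)" using gi False by simp
        have "nat (snd g) < mm" using gi by (simp add: nat_less_iff)
        hence "nat (snd g) < p ^ Suc s" by (simp only: mm_def)
        hence "\<not> cg n (int p) (xx ^ nat (snd g)) 1"
          using x_order[OF assms(1) nb(1,2)] \<open>0 < nat (snd g)\<close> by blast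
        thus ?thesis unfolding \<psi>_def \<Phi>_def using matL_not_one nb by blast
      qed
      ultimately show ?thesis by blast
    next
      case True
      obtain i where i: "i \<in> I" "fst g i \<noteq> 0"
      proof -
        have "\<exists>i\<in>I. fst g i \<noteq> 0"
        proof (rule ccontr)
          assume "\<not> (\<exists>i\<in>I. fst g i \<noteq> 0)"
          hence "fst g = (\<lambda>i\<in>I. 0)" using g(1) by (auto simp: carr PiE_def extensional_def)
          hence "g = \<one>\<^bsub>?G\<^esub>" using True oneG by (cases g) simp
          thus False using g(2) by simp
        qed
        thus ?thesis using that by blast
      qed
      define \<Phi> where "\<Phi> = (\<lambda>(k::int, a::int). matL n (int p) (nat k) (nat (c ^ nat a mod M)))"
      define \<psi> where "\<psi> = (\<lambda>z::('i \<Rightarrow> int) \<times> int. \<Phi> (fst z i, snd z))"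
      have Phic: "\<Phi> ka \<in> carrier ?U" for ka
        unfolding \<Phi>_def using nb(4) cpowmod by (cases ka) (auto intro!: matL_carrier)
      have "\<psi> \<in> hom ?G ?U"
      proof (unfold hom_def, intro CollectI conjI ballI)
        show "\<psi> \<in> carrier ?G \<rightarrow> carrier ?U" using Phic by (simp add: \<psi>_def)
      next
        fix x y assume xy: "x \<in> carrier ?G" "y \<in> carrier ?G"
        have x0: "0 \<le> fst x i" "0 \<le> fst y i" "0 \<le> snd x" "0 \<le> snd y"
          using carrI[OF xy(1) i(1)] carrI[OF xy(2) i(1)] by auto
        define A1 where "A1 = nat (snd x)"
        define A2 where "A2 = nat (snd y)"
        have "\<psi> (x \<otimes>\<^bsub>?G\<^esub> y) = matL n (int p) (nat ((fst x i + c ^ A1 * fst y i) mod int mm))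
             (nat (c ^ nat ((snd x + snd y) mod M) mod M))"
          using i(1) unfolding \<psi>_def \<Phi>_def multG by (simp add: M A1_def)
        also have "\<dots> = \<psi> x \<otimes>\<^bsub>?U\<^esub> \<psi> y"
          unfolding unitri_mult \<psi>_def \<Phi>_def prod.case
        proof (rule matL_mult[symmetric, OF _ xm'])
          show "int p > 0" using Pp .
          have "int (nat (fst x i) + nat (c ^ nat (snd x) mod M) * nat (fst y i)) mod int mm
              = (fst x i + (c ^ A1 mod M) * fst y i) mod int mm"
            using x0 M0 by (simp add: A1_def)
          also have "\<dots> = (fst x i + c ^ A1 * fst y i) mod int mm"
            by (simp add: M mod_add_mult_helper)
          finally show "(nat (fst x i) + nat (c ^ nat (snd x) mod M) * nat (fst y i)) mod mm
              = nat ((fst x i + c ^ A1 * fst y i) mod int mm) mod mm"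
            using mm0 by (intro nat_mod_int) auto
          have E: "nat ((snd x + snd y) mod M) = (A1 + A2) mod mm"
          proof -
            have "int ((A1 + A2) mod mm) = (snd x + snd y) mod M"
              using x0 by (simp add: A1_def A2_def M of_nat_mod)
            thus ?thesis by simp
          qed
          have "int (nat (c ^ nat (snd x) mod M) * nat (c ^ nat (snd y) mod M)) mod int mm
              = ((c ^ A1 mod M) * (c ^ A2 mod M)) mod M"
            using M0 by (simp add: A1_def A2_def M)
          also have "\<dots> = c ^ (A1 + A2) mod M" by (simp add: mod_mult_eq power_add)
          also have "\<dots> = c ^ ((A1 + A2) mod mm) mod M"
            unfolding M_def mm_def using cpow_reduce[OF assms(1,4)] by simp
          finally have fin: "int (nat (c ^ nat (snd x) mod M) * nat (c ^ nat (snd y) mod M)) mod int mm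
              = c ^ ((A1 + A2) mod mm) mod M" .
          show "nat (c ^ nat (snd x) mod M) * nat (c ^ nat (snd y) mod M) mod mm
              = nat (c ^ nat ((snd x + snd y) mod M) mod M) mod mm"
            unfolding E using nat_mod_int[OF mm0 fin[unfolded M]] by (simp only: M)
        qed
        finally show "\<psi> (x \<otimes>\<^bsub>?G\<^esub> y) = \<psi> x \<otimes>\<^bsub>?U\<^esub> \<psi> y" .
      qed
      moreover have "continuous_map ?T (discrete_topology (carrier ?U)) \<psi>"
      proof -
        have a1: "continuous_map ?T (discrete_topology {0..<M}) (\<lambda>z. fst z i)"
        proof -
          have "continuous_map ?T (cyc_prod_top M I) fst"
            unfolding sdprod_top_def by (rule continuous_map_fst)
          moreover have "continuous_map (cyc_prod_top M I) (discrete_topology {0..<M}) (\<lambda>f. f i)"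
            unfolding cyc_prod_top_def by (rule continuous_map_product_projection[OF i(1)])
          ultimately have "continuous_map ?T (discrete_topology {0..<M}) ((\<lambda>f. f i) \<circ> fst)"
            by (rule continuous_map_compose)
          thus ?thesis by (simp add: o_def)
        qed
        have a2: "continuous_map ?T (discrete_topology {0..<M}) snd"
          unfolding sdprod_top_def by (rule continuous_map_snd)
        have a: "continuous_map ?T (discrete_topology ({0..<M} \<times> {0..<M})) (\<lambda>z. (fst z i, snd z))"
          unfolding prod_topology_discrete_topology by (rule continuous_map_pairedI[OF a1 a2])
        have b: "continuous_map (discrete_topology ({0..<M} \<times> {0..<M})) (discrete_topology (carrier ?U)) \<Phi>"
          using Phic by simp
        have "\<psi> = \<Phi> \<circ> (\<lambda>z. (fst z i, snd z))" by (simp add: \<psi>_def o_def)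
        thus ?thesis using continuous_map_compose[OF a b] by simp
      qed
      moreover have "\<psi> g \<noteq> \<one>\<^bsub>?U\<^esub>"
      proof -
        have gi: "0 \<le> fst g i" "fst g i < int mm" using carrI[OF g(1) i(1)] by (auto simp: M)
        have "0 < nat (fst g i)" using gi i(2) by simp
        have "nat (fst g i) < mm" using gi by (simp add: nat_less_iff)
        hence "nat (fst g i) < p ^ Suc s" by (simp only: mm_def)
        hence "\<not> cg n (int p) (xx ^ nat (fst g i)) 1"
          using x_order[OF assms(1) nb(1,2)] \<open>0 < nat (fst g i)\<close> by blast
        thus ?thesis unfolding \<psi>_def \<Phi>_def prod.case using matL_not_one nb by blast
      qed
      ultimately show ?thesis by blast
    qed
  qed
qed

theorem proposition5p1:
  fixes p k s n :: nat
    and I :: "'i set"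
    and H :: "'a monoid" and TH :: "'a topology"
  assumes "prime p" and "k \<ge> 1" and "s \<ge> 1" and "n = p ^ s + 1"
    and "group H"
    and "(\<exists>\<phi>. \<phi> \<in> iso (cyc_prod (int p ^ (s+1)) I) H
              \<and> homeomorphic_map (cyc_prod_top (int p ^ (s+1)) I) TH \<phi>)
       \<or> (\<exists>\<phi>. \<phi> \<in> iso (sdprod (int p ^ (s+1)) (int p ^ k + 1) I) H
              \<and> homeomorphic_map (sdprod_top (int p ^ (s+1)) I) TH \<phi>)
       \<or> (p = 2 \<and> (\<exists>\<phi>. \<phi> \<in> iso (sdprod (2 ^ (s+1)) (- (2 ^ k + 1)) I) H
              \<and> homeomorphic_map (sdprod_top (2 ^ (s+1)) I) TH \<phi>))
       \<or> (p = 2 \<and> (\<exists>\<phi>. \<phi> \<in> iso (sdprod (2 ^ (s+1)) (- 1) I) H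
              \<and> homeomorphic_map (sdprod_top (2 ^ (s+1)) I) TH \<phi>))"
  shows "\<forall>u \<in> carrier H. u \<noteq> \<one>\<^bsub>H\<^esub> \<longrightarrow>
           (\<exists>\<rho> \<in> hom H (unitri n (int p)).
              continuous_map TH (discrete_topology (carrier (unitri n (int p)))) \<rho>
              \<and> \<rho> u \<noteq> \<one>\<^bsub>unitri n (int p)\<^esub>)"
proof -
  have pr: "prime p" and nn: "n = p ^ s + 1" and grp: "group H" using assms by auto
  from assms(6) show ?thesis
  proof (elim disjE conjE exE)
    fix \<phi> assume h1: "\<phi> \<in> iso (cyc_prod (int p ^ (s+1)) I) H"
              and h2: "homeomorphic_map (cyc_prod_top (int p ^ (s+1)) I) TH \<phi>"
    show ?thesis using cyc_case[OF pr nn grp h1 h2] .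
  next
    fix \<phi> assume h1: "\<phi> \<in> iso (sdprod (int p ^ (s+1)) (int p ^ k + 1) I) H"
              and h2: "homeomorphic_map (sdprod_top (int p ^ (s+1)) I) TH \<phi>"
    have cd: "int p dvd (int p ^ k + 1) - 1" using assms(2) by simp
    show ?thesis using sd_case[OF pr nn grp cd h1 h2] .
  next
    fix \<phi> assume p2: "p = 2" and h1: "\<phi> \<in> iso (sdprod (2 ^ (s+1)) (- (2 ^ k + 1)) I) H"
              and h2: "homeomorphic_map (sdprod_top (2 ^ (s+1)) I) TH \<phi>"
    have ip: "int p ^ (s+1) = 2 ^ (s+1)" using p2 by simp
    have "(2::int) dvd 2 ^ k" using assms(2) by simp
    hence "(2::int) dvd - (2 ^ k) - 2" by (intro dvd_diff) auto
    hence "int p dvd (- (2 ^ k + 1)) - 1" using p2 by (simp add: algebra_simps)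
    thus ?thesis using sd_case[OF pr nn grp _ h1[folded ip] h2[folded ip]] by blast
  next
    fix \<phi> assume p2: "p = 2" and h1: "\<phi> \<in> iso (sdprod (2 ^ (s+1)) (- 1) I) H"
              and h2: "homeomorphic_map (sdprod_top (2 ^ (s+1)) I) TH \<phi>"
    have ip: "int p ^ (s+1) = 2 ^ (s+1)" using p2 by simp
    have "int p dvd (- 1) - 1" using p2 by simp
    thus ?thesis using sd_case[OF pr nn grp _ h1[folded ip] h2[folded ip]] by blast
  qed
qed

end
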